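(* Let $T:\mathbb{Z}_{\ge 0}\to\mathbb{R}$ satisfy $T(mn) = T(m)T(n) + T(m-1)T(n-1)$ for all integers $m,n\ge 1$. If $T(0)\neq 0$, then $T(n)=\tfrac12$ for all $n\ge 0$. *)

theory Defs
  imports Complex_Main
begin

end

theory Submission
  imports Defs
begin

theorem lemma8:
  fixes T :: "nat \<Rightarrow> real"
  assumes rec: "\<And>m n. m \<ge> 1 \<Longrightarrow> n \<ge> 1 \<Longrightarrow> T (m * n) = T m * T n + T (m - 1) * T (n - 1)"
    and nz: "T 0 \<noteq> 0"
  shows "\<forall>n. T n = 1 / 2"
proof -
  define a where "a = T 0"
  define b where "b = T 1"
  have h: "a * T (n-1) = (1 - b) * T n" if "n \<ge> 1" for n
    using rec[of 1 n] that by (simp add: a_def b_def algebra_simps)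
  have ab: "a * a = (1 - b) * b" using h[of 1] by (simp add: b_def a_def)
  have a0: "a \<noteq> 0" using nz a_def by simp
  have b1: "1 - b \<noteq> 0" using ab a0 by auto
  define c where "c = a / (1 - b)"
  have Tn: "T n = a * c ^ n" for n
  proof (induction n)
    case 0 then show ?case by (simp add: a_def)
  next
    case (Suc n)
    have "(1 - b) * T (Suc n) = a * T n" using h[of "Suc n"] by simp
    then have "T (Suc n) = c * T n" using b1 by (simp add: c_def field_simps)
    then show ?case using Suc by simp
  qed
  have bc: "b = a * c" using Tn[of 1] b_def by simp
  have e4: "T 4 = T 2 * T 2 + T 1 * T 1" using rec[of 2 2] by simp
  hence "a * c^4 = a*a*c^4 + a*a*c^2" using Tn[of 4] Tn[of 2] Tn[of 1]
    by (simp add: algebra_simps power2_eq_square power4_eq_xxxx)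
  hence "a * (c^4 - a*c^4 - a*c^2) = 0" by (simp add: algebra_simps)
  hence e1: "c^4 - a*c^4 - a*c^2 = 0" using a0 by simp
  have c0: "c \<noteq> 0" using bc ab a0 by auto
  have "c^2 * (c^2 - a*c^2 - a) = 0" using e1 by (simp add: power4_eq_xxxx power2_eq_square algebra_simps)
  hence "c^2 - a*c^2 - a = 0" using c0 by simp
  hence e2: "c^2 = a*(c^2 + 1)" by (simp add: algebra_simps)
  have "a * (a - c * (1 - a*c)) = 0" using ab bc by (simp add: algebra_simps)
  hence e3: "a = c * (1 - a*c)" using a0 by simp
  hence "a * (c^2 + 1) = c" by (simp add: power2_eq_square algebra_simps)
  hence "c * c = c * 1" using e2 by (simp add: power2_eq_square)
  hence c1: "c = 1" using c0 by (metis mult_left_cancel)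
  then have "a = 1/2" using e3 by simp
  then show ?thesis using Tn c1 by simp
qed

end
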